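(* Let $\rho$ be a two-qubit state whose reduced state on qubit $A$ is maximally mixed, i.e. $\vec{x}=0$ where $x_i=\mathrm{Tr}[\rho(\sigma_i\otimes\mathbb{1})]$. Let $y_j=\mathrm{Tr}[\rho(\mathbb{1}\otimes\sigma_j)]$, $T_{ij}=\mathrm{Tr}[\rho(\sigma_i\otimes\sigma_j)]$ and $Y=\vec{y}^{\,T}\vec{y}$ (the $3\times 3$ matrix with entries $y_iy_j$). Then $$G(\rho)=\tfrac14\big[|\vec{y}|^2+\|T\|^2-\kappa\big],$$ where $\|T\|^2=\sum_{i,j}T_{ij}^2$ and $\kappa$ is the largest eigenvalue of $T^TT+Y$.
   Context: $\sigma_i$ are the Pauli matrices. The Hilbert–Schmidt distance is $D(M,N)=\sqrt{\mathrm{Tr}[(M-N)(M-N)^\dagger]}$. For unit vectors $\vec{k},\vec{\ell}\in\mathbb{R}^3$ let $\Pi^A_\pm=\frac12(\mathbb{1}\pm\vec{k}\cdot\vec{\sigma})$, $\Pi^B_\pm=\frac12(\mathbb{1}\pm\vec{\ell}\cdot\vec{\sigma})$, and $\chi_{\vec{k},\vec{\ell}}=\sum_{i,j=\pm}(\Pi^A_i\otimes\Pi^B_j)\rho(\Pi^A_i\otimes\Pi^B_j)$. The symmetric geometric measure is $G(\rho)=\min_{\vec{k},\vec{\ell}}D^2(\rho,\chi_{\vec{k},\vec{\ell}})$ over unit vectors. *)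

theory Defs
  imports "Jordan_Normal_Form.Schur_Decomposition" "Jordan_Normal_Form.Char_Poly"
begin

(* Pauli matrices: pauli 0 = sigma_1 (X), pauli 1 = sigma_2 (Y), pauli 2 = sigma_3 (Z) *)
definition pauli :: "nat \<Rightarrow> complex mat" where
  "pauli i = (if i = 0 then mat_of_rows_list 2 [[0, 1], [1, 0]]
              else if i = 1 then mat_of_rows_list 2 [[0, -\<i>], [\<i>, 0]]
              else mat_of_rows_list 2 [[1, 0], [0, -1]])"

(* Kronecker (tensor) product; qubit A is the first factor *)
definition tensor :: "complex mat \<Rightarrow> complex mat \<Rightarrow> complex mat" (infixl "\<otimes>\<^sub>k" 70) where
  "A \<otimes>\<^sub>k B = mat (dim_row A * dim_row B) (dim_col A * dim_col B)
      (\<lambda>(r, c). A $$ (r div dim_row B, c div dim_col B) * B $$ (r mod dim_row B, c mod dim_col B))"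

definition ctrace :: "complex mat \<Rightarrow> complex" where
  "ctrace A = (\<Sum>i<dim_row A. A $$ (i, i))"

definition two_qubit_state :: "complex mat \<Rightarrow> bool" where
  "two_qubit_state \<rho> \<longleftrightarrow> \<rho> \<in> carrier_mat 4 4 \<and> mat_adjoint \<rho> = \<rho> \<and> ctrace \<rho> = 1 \<and>
     (\<forall>v \<in> carrier_vec 4. 0 \<le> Re (\<Sum>i<4. cnj (v $ i) * (\<rho> *\<^sub>v v) $ i))"

definition hs_dist :: "complex mat \<Rightarrow> complex mat \<Rightarrow> real" where
  "hs_dist M N = sqrt (Re (ctrace ((M - N) * mat_adjoint (M - N))))"

definition unit3 :: "real vec \<Rightarrow> bool" where
  "unit3 k \<longleftrightarrow> k \<in> carrier_vec 3 \<and> (\<Sum>i<3. (k $ i)^2) = 1"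

definition bloch_op :: "real vec \<Rightarrow> complex mat" where
  "bloch_op k = complex_of_real (k $ 0) \<cdot>\<^sub>m pauli 0 + complex_of_real (k $ 1) \<cdot>\<^sub>m pauli 1
               + complex_of_real (k $ 2) \<cdot>\<^sub>m pauli 2"

definition proj :: "real vec \<Rightarrow> real \<Rightarrow> complex mat" where
  "proj k s = (1/2 :: complex) \<cdot>\<^sub>m (1\<^sub>m 2 + complex_of_real s \<cdot>\<^sub>m bloch_op k)"

definition chi :: "complex mat \<Rightarrow> real vec \<Rightarrow> real vec \<Rightarrow> complex mat" where
  "chi \<rho> k l =
     (let P = (\<lambda>s t. proj k s \<otimes>\<^sub>k proj l t) in
        P 1 1 * \<rho> * P 1 1 + P 1 (-1) * \<rho> * P 1 (-1)
      + P (-1) 1 * \<rho> * P (-1) 1 + P (-1) (-1) * \<rho> * P (-1) (-1))"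

definition geom_G :: "complex mat \<Rightarrow> real" where
  "geom_G \<rho> = Inf {(hs_dist \<rho> (chi \<rho> k l))^2 | k l. unit3 k \<and> unit3 l}"

(* Bloch data, indices 0,1,2 correspond to 1,2,3 *)
definition loc_x :: "complex mat \<Rightarrow> nat \<Rightarrow> real" where
  "loc_x \<rho> i = Re (ctrace (\<rho> * (pauli i \<otimes>\<^sub>k 1\<^sub>m 2)))"

definition loc_y :: "complex mat \<Rightarrow> nat \<Rightarrow> real" where
  "loc_y \<rho> j = Re (ctrace (\<rho> * (1\<^sub>m 2 \<otimes>\<^sub>k pauli j)))"

definition corr :: "complex mat \<Rightarrow> nat \<Rightarrow> nat \<Rightarrow> real" where
  "corr \<rho> i j = Re (ctrace (\<rho> * (pauli i \<otimes>\<^sub>k pauli j)))"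

definition corr_mat :: "complex mat \<Rightarrow> real mat" where
  "corr_mat \<rho> = mat 3 3 (\<lambda>(i, j). corr \<rho> i j)"

definition Y_mat :: "complex mat \<Rightarrow> real mat" where
  "Y_mat \<rho> = mat 3 3 (\<lambda>(i, j). loc_y \<rho> i * loc_y \<rho> j)"

definition largest_eigenvalue :: "real mat \<Rightarrow> real" where
  "largest_eigenvalue M = Max {k. eigenvalue M k}"

end

theory Submission imports Defs "HOL-Analysis.Elementary_Topology"
begin

lemma idx2: "(i::nat) < 2 \<longleftrightarrow> i = 0 \<or> i = 1" by auto
lemma idx4: "(i::nat) < 4 \<longleftrightarrow> i = 0 \<or> i = 1 \<or> i = 2 \<or> i = 3" by auto

lemma pauli_dim[simp]: "dim_row (pauli i) = 2" "dim_col (pauli i) = 2"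
  by (simp_all add: pauli_def mat_of_rows_list_def)
lemma pauli_carrier[simp]: "pauli i \<in> carrier_mat 2 2"
  by (intro carrier_matI) simp_all

lemma pauli_ent:
  "pauli 0 $$ (0,0) = 0" "pauli 0 $$ (0,1) = 1" "pauli 0 $$ (1,0) = 1" "pauli 0 $$ (1,1) = 0"
  "pauli 1 $$ (0,0) = 0" "pauli 1 $$ (0,1) = -\<i>" "pauli 1 $$ (1,0) = \<i>" "pauli 1 $$ (1,1) = 0"
  "pauli 2 $$ (0,0) = 1" "pauli 2 $$ (0,1) = 0" "pauli 2 $$ (1,0) = 0" "pauli 2 $$ (1,1) = -1"
  by (simp_all add: pauli_def mat_of_rows_list_def)

lemma tensor_dim[simp]: "dim_row (A \<otimes>\<^sub>k B) = dim_row A * dim_row B" "dim_col (A \<otimes>\<^sub>k B) = dim_col A * dim_col B"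
  by (simp_all add: tensor_def)

lemma tensor_idx[simp]: "i < dim_row A * dim_row B \<Longrightarrow> j < dim_col A * dim_col B \<Longrightarrow>
  (A \<otimes>\<^sub>k B) $$ (i,j) = A $$ (i div dim_row B, j div dim_col B) * B $$ (i mod dim_row B, j mod dim_col B)"
  by (simp add: tensor_def)

lemma sum4: "(\<Sum>i<(4::nat). f i) = f 0 + f 1 + f 2 + (f 3 :: 'a::comm_monoid_add)"
  by (simp add: eval_nat_numeral)
lemma sum2: "(\<Sum>i<(2::nat). f i) = f 0 + (f 1 :: 'a::comm_monoid_add)"
  by (simp add: eval_nat_numeral)
lemma sum3: "(\<Sum>i<(3::nat). f i) = f 0 + f 1 + (f 2 :: 'a::comm_monoid_add)"
  by (simp add: eval_nat_numeral)

lemma sp4: "v \<in> carrier_vec 4 \<Longrightarrow> w \<in> carrier_vec 4 \<Longrightarrow> v \<bullet> w = v$0*w$0 + v$1*w$1 + v$2*w$2 + v$3*w$3"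
  by (simp add: scalar_prod_def atLeast0LessThan sum4)
lemma sp2: "v \<in> carrier_vec 2 \<Longrightarrow> w \<in> carrier_vec 2 \<Longrightarrow> v \<bullet> w = v$0*w$0 + v$1*w$1"
  by (simp add: scalar_prod_def atLeast0LessThan sum2)

lemma mult4: "A \<in> carrier_mat 4 4 \<Longrightarrow> B \<in> carrier_mat 4 4 \<Longrightarrow> i < 4 \<Longrightarrow> j < 4 \<Longrightarrow>
  (A * B) $$ (i,j) = A$$(i,0)*B$$(0,j) + A$$(i,1)*B$$(1,j) + A$$(i,2)*B$$(2,j) + A$$(i,3)*B$$(3,j)"
  by (simp add: scalar_prod_def atLeast0LessThan sum4)
lemma mult2: "A \<in> carrier_mat 2 2 \<Longrightarrow> B \<in> carrier_mat 2 2 \<Longrightarrow> i < 2 \<Longrightarrow> j < 2 \<Longrightarrow>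
  (A * B) $$ (i,j) = A$$(i,0)*B$$(0,j) + A$$(i,1)*B$$(1,j)"
  by (simp add: scalar_prod_def atLeast0LessThan sum2)

lemma tensor_carrier[simp]: "A \<in> carrier_mat 2 2 \<Longrightarrow> B \<in> carrier_mat 2 2 \<Longrightarrow> A \<otimes>\<^sub>k B \<in> carrier_mat 4 4"
  by (intro carrier_matI) (auto dest!: carrier_matD)


lemma mixed: assumes "A \<in> carrier_mat 2 2" "B \<in> carrier_mat 2 2" "C \<in> carrier_mat 2 2" "D \<in> carrier_mat 2 2"
  shows "(A \<otimes>\<^sub>k B) * (C \<otimes>\<^sub>k D) = (A * C) \<otimes>\<^sub>k (B * D)"
proof (rule eq_matI)
  have d: "dim_row A = 2" "dim_col A = 2" "dim_row B = 2" "dim_col B = 2" "dim_row C = 2" "dim_col C = 2" "dim_row D = 2" "dim_col D = 2"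
    using assms by auto
  show "dim_row ((A \<otimes>\<^sub>k B) * (C \<otimes>\<^sub>k D)) = dim_row ((A * C) \<otimes>\<^sub>k (B * D))"
       "dim_col ((A \<otimes>\<^sub>k B) * (C \<otimes>\<^sub>k D)) = dim_col ((A * C) \<otimes>\<^sub>k (B * D))" using assms by auto
  fix i j assume "i < dim_row ((A * C) \<otimes>\<^sub>k (B * D))" "j < dim_col ((A * C) \<otimes>\<^sub>k (B * D))"
  hence ij: "i < 4" "j < 4" using d by auto
  have e: "((A \<otimes>\<^sub>k B) * (C \<otimes>\<^sub>k D)) $$ (i,j) = (A \<otimes>\<^sub>k B)$$(i,0)*(C \<otimes>\<^sub>k D)$$(0,j) + (A \<otimes>\<^sub>k B)$$(i,1)*(C \<otimes>\<^sub>k D)$$(1,j) + (A \<otimes>\<^sub>k B)$$(i,2)*(C \<otimes>\<^sub>k D)$$(2,j) + (A \<otimes>\<^sub>k B)$$(i,3)*(C \<otimes>\<^sub>k D)$$(3,j)"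
    using assms ij by (intro mult4) auto
  show "((A \<otimes>\<^sub>k B) * (C \<otimes>\<^sub>k D)) $$ (i,j) = ((A * C) \<otimes>\<^sub>k (B * D)) $$ (i,j)"
    unfolding e using ij unfolding idx4
    apply (elim disjE)
    apply (simp_all add: d scalar_prod_def atLeast0LessThan sum2 algebra_simps)
    done
qed


definition tau :: "nat \<Rightarrow> complex mat" where
  "tau m = (if m = 0 then 1\<^sub>m 2 else pauli (m - 1))"

lemma tau_carrier[simp]: "tau m \<in> carrier_mat 2 2"
  by (simp add: tau_def)
lemma tau_dim[simp]: "dim_row (tau m) = 2" "dim_col (tau m) = 2"
  by (simp_all add: tau_def)

definition FF :: "complex mat \<Rightarrow> complex mat \<Rightarrow> complex mat \<Rightarrow> complex" where
  "FF M X Y = ctrace (M * (X \<otimes>\<^sub>k Y))"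

lemma ctrace_mult4: assumes "A \<in> carrier_mat 4 4" "B \<in> carrier_mat 4 4"
  shows "ctrace (A * B) = (\<Sum>i<4. \<Sum>j<4. A$$(i,j) * B$$(j,i))"
  using assms unfolding ctrace_def by (simp add: scalar_prod_def atLeast0LessThan)

lemma FF_formula: assumes "M \<in> carrier_mat 4 4" "X \<in> carrier_mat 2 2" "Y \<in> carrier_mat 2 2"
  shows "FF M X Y =
    M$$(0,0)*X$$(0,0)*Y$$(0,0) + M$$(0,1)*X$$(0,0)*Y$$(1,0) + M$$(0,2)*X$$(1,0)*Y$$(0,0) + M$$(0,3)*X$$(1,0)*Y$$(1,0) +
    M$$(1,0)*X$$(0,0)*Y$$(0,1) + M$$(1,1)*X$$(0,0)*Y$$(1,1) + M$$(1,2)*X$$(1,0)*Y$$(0,1) + M$$(1,3)*X$$(1,0)*Y$$(1,1) +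
    M$$(2,0)*X$$(0,1)*Y$$(0,0) + M$$(2,1)*X$$(0,1)*Y$$(1,0) + M$$(2,2)*X$$(1,1)*Y$$(0,0) + M$$(2,3)*X$$(1,1)*Y$$(1,0) +
    M$$(3,0)*X$$(0,1)*Y$$(0,1) + M$$(3,1)*X$$(0,1)*Y$$(1,1) + M$$(3,2)*X$$(1,1)*Y$$(0,1) + M$$(3,3)*X$$(1,1)*Y$$(1,1)"
proof -
  have d: "dim_row X = 2" "dim_col X = 2" "dim_row Y = 2" "dim_col Y = 2" using assms by auto
  show ?thesis unfolding FF_def
    using assms by (subst ctrace_mult4) (auto simp: sum4 d algebra_simps)
qed

lemma tau_ent:
  "tau 0 $$ (0,0) = 1" "tau 0 $$ (0,1) = 0" "tau 0 $$ (1,0) = 0" "tau 0 $$ (1,1) = 1"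
  "tau 1 $$ (0,0) = 0" "tau 1 $$ (0,1) = 1" "tau 1 $$ (1,0) = 1" "tau 1 $$ (1,1) = 0"
  "tau 2 $$ (0,0) = 0" "tau 2 $$ (0,1) = -\<i>" "tau 2 $$ (1,0) = \<i>" "tau 2 $$ (1,1) = 0"
  "tau 3 $$ (0,0) = 1" "tau 3 $$ (0,1) = 0" "tau 3 $$ (1,0) = 0" "tau 3 $$ (1,1) = -1"
  by (simp_all add: tau_def pauli_def mat_of_rows_list_def)

lemma adj_idx: "i < dim_col A \<Longrightarrow> j < dim_row A \<Longrightarrow> mat_adjoint A $$ (i,j) = cnj (A $$ (j,i))"
  by (simp add: mat_adjoint_def mat_of_rows_def)
lemma adj_dim[simp]: "dim_row (mat_adjoint A) = dim_col A" "dim_col (mat_adjoint A) = dim_row A"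
  by (simp_all add: mat_adjoint_def)
lemma adj_carrier[simp]: "A \<in> carrier_mat n m \<Longrightarrow> mat_adjoint A \<in> carrier_mat m n"
  by (intro carrier_matI) auto

lemma cmod_sq: "(cmod z)^2 = (Re z)^2 + (Im z)^2"
  by (simp add: cmod_def)


definition nsq :: "complex \<Rightarrow> real" where "nsq z = (cmod z)^2"

lemma re_cnj: "Re (z * cnj z) = (cmod z)^2"
  unfolding cmod_sq by (simp add: power2_eq_square)

lemma grp4: "(cmod (p+q+r+s))^2 + (cmod (p-q+r-s))^2 + (cmod (p+q-r-s))^2 + (cmod (p-q-r+s))^2
   = 4 * ((cmod p)^2 + (cmod q)^2 + (cmod r)^2 + (cmod s)^2)"
  unfolding cmod_sq by (simp add: power2_eq_square algebra_simps)

lemma parseval: assumes M: "M \<in> carrier_mat 4 4"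
  shows "Re (ctrace (M * mat_adjoint M)) = 1/4 * (\<Sum>a<4. \<Sum>b<4. (cmod (FF M (tau a) (tau b)))^2)"
proof -
  have l: "Re (ctrace (M * mat_adjoint M)) = (\<Sum>i<4. \<Sum>j<4. (cmod (M$$(i,j)))^2)"
  proof -
    have "ctrace (M * mat_adjoint M) = (\<Sum>i<4. \<Sum>j<4. M$$(i,j) * cnj (M$$(i,j)))"
      using M by (simp add: ctrace_mult4 adj_idx)
    then show ?thesis by (simp only: Re_sum re_cnj)
  qed
  let ?m = "\<lambda>i j. M$$(i,j)"
  have f: "FF M (tau 0) (tau 0) = M$$(0,0) + M$$(1,1) + M$$(2,2) + M$$(3,3)"
     "FF M (tau 0) (tau 3) = M$$(0,0) - M$$(1,1) + M$$(2,2) - M$$(3,3)"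
     "FF M (tau 3) (tau 0) = M$$(0,0) + M$$(1,1) - M$$(2,2) - M$$(3,3)"
     "FF M (tau 3) (tau 3) = M$$(0,0) - M$$(1,1) - M$$(2,2) + M$$(3,3)"
     "FF M (tau 0) (tau 1) = M$$(0,1) + M$$(1,0) + M$$(2,3) + M$$(3,2)"
     "FF M (tau 0) (tau 2) = \<i> * (M$$(0,1) - M$$(1,0) + M$$(2,3) - M$$(3,2))"
     "FF M (tau 3) (tau 1) = M$$(0,1) + M$$(1,0) - M$$(2,3) - M$$(3,2)"
     "FF M (tau 3) (tau 2) = \<i> * (M$$(0,1) - M$$(1,0) - M$$(2,3) + M$$(3,2))"
     "FF M (tau 1) (tau 0) = M$$(0,2) + M$$(1,3) + M$$(2,0) + M$$(3,1)"
     "FF M (tau 1) (tau 3) = M$$(0,2) - M$$(1,3) + M$$(2,0) - M$$(3,1)"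
     "FF M (tau 2) (tau 0) = \<i> * (M$$(0,2) + M$$(1,3) - M$$(2,0) - M$$(3,1))"
     "FF M (tau 2) (tau 3) = \<i> * (M$$(0,2) - M$$(1,3) - M$$(2,0) + M$$(3,1))"
     "FF M (tau 1) (tau 1) = M$$(0,3) + M$$(1,2) + M$$(2,1) + M$$(3,0)"
     "FF M (tau 1) (tau 2) = \<i> * (M$$(0,3) - M$$(1,2) + M$$(2,1) - M$$(3,0))"
     "FF M (tau 2) (tau 1) = \<i> * (M$$(0,3) + M$$(1,2) - M$$(2,1) - M$$(3,0))"
     "FF M (tau 2) (tau 2) = - (M$$(0,3) - M$$(1,2) - M$$(2,1) + M$$(3,0))"
    using M by (simp_all only: FF_formula tau_carrier tau_ent) (simp_all add: algebra_simps)
  note g1 = grp4[of "M$$(0,0)" "M$$(1,1)" "M$$(2,2)" "M$$(3,3)"]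
  note g2 = grp4[of "M$$(0,1)" "M$$(1,0)" "M$$(2,3)" "M$$(3,2)"]
  note g3 = grp4[of "M$$(0,2)" "M$$(1,3)" "M$$(2,0)" "M$$(3,1)"]
  note g4 = grp4[of "M$$(0,3)" "M$$(1,2)" "M$$(2,1)" "M$$(3,0)"]
  show ?thesis unfolding l
    apply (simp only: sum4 f norm_mult norm_ii norm_minus_cancel mult_1_left)
    using g1 g2 g3 g4 unfolding nsq_def[symmetric] by (simp add: algebra_simps)
qed


lemma bloch_dim[simp]: "dim_row (bloch_op k) = 2" "dim_col (bloch_op k) = 2"
  by (simp_all add: bloch_op_def)
lemma bloch_carrier[simp]: "bloch_op k \<in> carrier_mat 2 2"
  by (simp add: bloch_op_def)
lemma proj_dim[simp]: "dim_row (proj k s) = 2" "dim_col (proj k s) = 2"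
  by (simp_all add: proj_def)
lemma proj_carrier[simp]: "proj k s \<in> carrier_mat 2 2"
  by (simp add: proj_def)

lemma bloch_ent:
  "bloch_op k $$ (0,0) = of_real (k$2)"
  "bloch_op k $$ (0,1) = of_real (k$0) - \<i> * of_real (k$1)"
  "bloch_op k $$ (1,0) = of_real (k$0) + \<i> * of_real (k$1)"
  "bloch_op k $$ (1,1) = - of_real (k$2)"
  by (simp_all add: bloch_op_def pauli_def mat_of_rows_list_def)

lemma proj_ent:
  "proj k s $$ (0,0) = (1 + of_real s * of_real (k$2)) / 2"
  "proj k s $$ (0,1) = of_real s * (of_real (k$0) - \<i> * of_real (k$1)) / 2"
  "proj k s $$ (1,0) = of_real s * (of_real (k$0) + \<i> * of_real (k$1)) / 2"
  "proj k s $$ (1,1) = (1 - of_real s * of_real (k$2)) / 2"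
  by (simp_all add: proj_def bloch_ent[unfolded One_nat_def])

definition deph :: "real vec \<Rightarrow> complex mat \<Rightarrow> complex mat" where
  "deph k X = proj k 1 * X * proj k 1 + proj k (-1) * X * proj k (-1)"

lemma deph_dim[simp]: "dim_row (deph k X) = 2" "dim_col (deph k X) = 2"
  by (simp_all add: deph_def)
lemma deph_carrier[simp]: "X \<in> carrier_mat 2 2 \<Longrightarrow> deph k X \<in> carrier_mat 2 2"
  by (intro carrier_matI) auto

lemma unit3D: "unit3 k \<Longrightarrow> (k$0)^2 + (k$1)^2 + (k$2)^2 = 1"
  by (simp add: unit3_def sum3)

lemma deph_ent: assumes "X \<in> carrier_mat 2 2" "i < 2" "j < 2"
  shows "deph k X $$ (i,j) = (\<Sum>a<2. \<Sum>b<2. proj k 1 $$ (i,a) * X $$ (a,b) * proj k 1 $$ (b,j)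
     + proj k (-1) $$ (i,a) * X $$ (a,b) * proj k (-1) $$ (b,j))"
  using assms by (simp add: deph_def scalar_prod_def atLeast0LessThan sum2 algebra_simps)

lemma deph_id: assumes "unit3 k" shows "deph k (1\<^sub>m 2) = 1\<^sub>m 2"
proof (rule eq_matI)
  have h: "(k$0)^2 + (k$1)^2 + (k$2)^2 = 1" using unit3D[OF assms] .
  fix i j assume "i < dim_row (1\<^sub>m 2 :: complex mat)" "j < dim_col (1\<^sub>m 2 :: complex mat)"
  hence ij: "i < 2" "j < 2" by auto
  show "deph k (1\<^sub>m 2) $$ (i,j) = 1\<^sub>m 2 $$ (i,j)"
    using ij unfolding idx2
    apply (elim disjE)
    apply (simp_all add: deph_ent sum2 proj_ent[unfolded One_nat_def] complex_eq_iff)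
    using h by (simp_all add: power2_eq_square field_simps)
qed auto


lemma deph_pauli: assumes "unit3 k" "a < 3"
  shows "deph k (pauli a) = complex_of_real (k$a) \<cdot>\<^sub>m bloch_op k"
proof (rule eq_matI)
  have h: "(k$0)^2 + (k$1)^2 + (k$2)^2 = 1" using unit3D[OF assms(1)] .
  fix i j assume "i < dim_row (complex_of_real (k$a) \<cdot>\<^sub>m bloch_op k)" "j < dim_col (complex_of_real (k$a) \<cdot>\<^sub>m bloch_op k)"
  hence ij: "i < 2" "j < 2" by auto
  have a: "a = 0 \<or> a = 1 \<or> a = 2" using assms(2) by auto
  show "deph k (pauli a) $$ (i,j) = (complex_of_real (k$a) \<cdot>\<^sub>m bloch_op k) $$ (i,j)"
    using ij a unfolding idx2
    apply (elim disjE)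
    apply (simp_all add: deph_ent sum2 proj_ent[unfolded One_nat_def] bloch_ent[unfolded One_nat_def] 
         pauli_ent[unfolded One_nat_def] complex_eq_iff)
    using h by (simp_all add: power2_eq_square field_simps)
qed auto


lemma mult22[simp]: "A \<in> carrier_mat 2 2 \<Longrightarrow> B \<in> carrier_mat 2 2 \<Longrightarrow> A * B \<in> carrier_mat 2 2"
  by (rule mult_carrier_mat)
lemma mult44[simp]: "A \<in> carrier_mat 4 4 \<Longrightarrow> B \<in> carrier_mat 4 4 \<Longrightarrow> A * B \<in> carrier_mat 4 4"
  by (rule mult_carrier_mat)

lemma ctrace_mult_gen: assumes "A \<in> carrier_mat n m" "B \<in> carrier_mat m n"
  shows "ctrace (A * B) = (\<Sum>i<n. \<Sum>j<m. A$$(i,j) * B$$(j,i))"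
  using assms unfolding ctrace_def by (simp add: scalar_prod_def atLeast0LessThan)

lemma ctrace_comm: assumes "A \<in> carrier_mat n m" "B \<in> carrier_mat m n"
  shows "ctrace (A * B) = ctrace (B * A)"
  using assms by (simp add: ctrace_mult_gen[OF assms] ctrace_mult_gen[OF assms(2,1)] sum.swap[of _ "{..<n}"] mult.commute)

lemma ctrace_add: assumes "A \<in> carrier_mat n n" "B \<in> carrier_mat n n"
  shows "ctrace (A + B) = ctrace A + ctrace B"
  using assms unfolding ctrace_def by (simp add: sum.distrib)

lemma ctrace_minus: assumes "A \<in> carrier_mat n n" "B \<in> carrier_mat n n"
  shows "ctrace (A - B) = ctrace A - ctrace B"
  using assms unfolding ctrace_def by (simp add: sum_subtractf)

lemma ctrace_cyc: assumes "P \<in> carrier_mat n n" "R \<in> carrier_mat n n" "B \<in> carrier_mat n n"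
  shows "ctrace (P * R * P * B) = ctrace (R * (P * B * P))"
proof -
  have "ctrace (P * R * P * B) = ctrace ((P * R) * (P * B))" using assms by (simp add: assoc_mult_mat[of _ n n _ n _ n])
  also have "\<dots> = ctrace ((P * B) * (P * R))" using assms by (intro ctrace_comm) auto
  also have "\<dots> = ctrace ((P * B * P) * R)" using assms by (simp add: assoc_mult_mat[of _ n n _ n _ n])
  also have "\<dots> = ctrace (R * (P * B * P))" using assms by (intro ctrace_comm) auto
  finally show ?thesis .
qed

lemma FF_add1: assumes "M \<in> carrier_mat 4 4" "X1 \<in> carrier_mat 2 2" "X2 \<in> carrier_mat 2 2" "Y \<in> carrier_mat 2 2"
  shows "FF M (X1 + X2) Y = FF M X1 Y + FF M X2 Y"
  using assms by (simp add: FF_formula algebra_simps)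
lemma FF_add2: assumes "M \<in> carrier_mat 4 4" "X \<in> carrier_mat 2 2" "Y1 \<in> carrier_mat 2 2" "Y2 \<in> carrier_mat 2 2"
  shows "FF M X (Y1 + Y2) = FF M X Y1 + FF M X Y2"
  using assms by (simp add: FF_formula algebra_simps)
lemma FF_smult1: assumes "M \<in> carrier_mat 4 4" "X \<in> carrier_mat 2 2" "Y \<in> carrier_mat 2 2"
  shows "FF M (c \<cdot>\<^sub>m X) Y = c * FF M X Y"
  using assms by (simp add: FF_formula algebra_simps)
lemma FF_smult2: assumes "M \<in> carrier_mat 4 4" "X \<in> carrier_mat 2 2" "Y \<in> carrier_mat 2 2"
  shows "FF M X (c \<cdot>\<^sub>m Y) = c * FF M X Y"
  using assms by (simp add: FF_formula algebra_simps)

lemma chi_carrier[simp]: "R \<in> carrier_mat 4 4 \<Longrightarrow> chi R k l \<in> carrier_mat 4 4"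
  unfolding chi_def Let_def by (intro add_carrier_mat mult_carrier_mat[of _ 4 4] tensor_carrier proj_carrier) auto

lemma chi_term: assumes R: "R \<in> carrier_mat 4 4" and X: "X \<in> carrier_mat 2 2" and Y: "Y \<in> carrier_mat 2 2"
  shows "ctrace ((proj k s \<otimes>\<^sub>k proj l t) * R * (proj k s \<otimes>\<^sub>k proj l t) * (X \<otimes>\<^sub>k Y))
     = FF R (proj k s * X * proj k s) (proj l t * Y * proj l t)"
proof -
  let ?P = "proj k s \<otimes>\<^sub>k proj l t"
  have "?P * (X \<otimes>\<^sub>k Y) * ?P = (proj k s * X * proj k s) \<otimes>\<^sub>k (proj l t * Y * proj l t)"
    using X Y by (simp add: mixed)
  moreover have "ctrace (?P * R * ?P * (X \<otimes>\<^sub>k Y)) = ctrace (R * (?P * (X \<otimes>\<^sub>k Y) * ?P))"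
    using R X Y by (intro ctrace_cyc) auto
  ultimately show ?thesis unfolding FF_def by simp
qed

lemma chi_trace: assumes R: "R \<in> carrier_mat 4 4" and X: "X \<in> carrier_mat 2 2" and Y: "Y \<in> carrier_mat 2 2"
  shows "ctrace (chi R k l * (X \<otimes>\<^sub>k Y)) = FF R (deph k X) (deph l Y)"
proof -
  let ?P = "\<lambda>s t. proj k s \<otimes>\<^sub>k proj l t"
  let ?T = "\<lambda>s t. ?P s t * R * ?P s t"
  let ?B = "X \<otimes>\<^sub>k Y"
  have c: "\<And>s t. ?T s t \<in> carrier_mat 4 4" using R by (intro mult_carrier_mat[of _ 4 4]) auto
  have B: "?B \<in> carrier_mat 4 4" using X Y by simp
  have "chi R k l * ?B = ?T 1 1 * ?B + ?T 1 (-1) * ?B + ?T (-1) 1 * ?B + ?T (-1) (-1) * ?B"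
    unfolding chi_def Let_def using c B
    by (simp add: add_mult_distrib_mat[of _ 4 4])
  hence "ctrace (chi R k l * ?B) = ctrace (?T 1 1 * ?B) + ctrace (?T 1 (-1) * ?B) + ctrace (?T (-1) 1 * ?B) + ctrace (?T (-1) (-1) * ?B)"
    using c B by (simp add: ctrace_add[of _ 4])
  also have "\<dots> = FF R (proj k 1 * X * proj k 1) (proj l 1 * Y * proj l 1) + FF R (proj k 1 * X * proj k 1) (proj l (-1) * Y * proj l (-1))
     + FF R (proj k (-1) * X * proj k (-1)) (proj l 1 * Y * proj l 1) + FF R (proj k (-1) * X * proj k (-1)) (proj l (-1) * Y * proj l (-1))"
    using R X Y by (simp add: chi_term)
  also have "\<dots> = FF R (deph k X) (deph l Y)"
    unfolding deph_def using R X Y by (simp add: FF_add1 FF_add2)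
  finally show ?thesis .
qed


lemma adj_tensor: assumes X: "X \<in> carrier_mat 2 2" and Y: "Y \<in> carrier_mat 2 2"
  shows "mat_adjoint (X \<otimes>\<^sub>k Y) = mat_adjoint X \<otimes>\<^sub>k mat_adjoint Y"
proof (rule eq_matI)
  have d: "dim_row X = 2" "dim_col X = 2" "dim_row Y = 2" "dim_col Y = 2" using X Y by auto
  show "dim_row (mat_adjoint (X \<otimes>\<^sub>k Y)) = dim_row (mat_adjoint X \<otimes>\<^sub>k mat_adjoint Y)"
    "dim_col (mat_adjoint (X \<otimes>\<^sub>k Y)) = dim_col (mat_adjoint X \<otimes>\<^sub>k mat_adjoint Y)" using d by auto
  fix i j assume "i < dim_row (mat_adjoint X \<otimes>\<^sub>k mat_adjoint Y)" "j < dim_col (mat_adjoint X \<otimes>\<^sub>k mat_adjoint Y)"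
  hence ij: "i < 4" "j < 4" using d by auto
  show "mat_adjoint (X \<otimes>\<^sub>k Y) $$ (i, j) = (mat_adjoint X \<otimes>\<^sub>k mat_adjoint Y) $$ (i, j)"
    using ij unfolding idx4 by (elim disjE) (simp_all add: adj_idx d)
qed

lemma tau_herm: assumes "m < 4" shows "mat_adjoint (tau m) = tau m"
proof (rule eq_matI)
  fix i j assume "i < dim_row (tau m)" "j < dim_col (tau m)"
  hence ij: "i < 2" "j < 2" by auto
  have m: "m = 0 \<or> m = 1 \<or> m = 2 \<or> m = 3" using assms by auto
  show "mat_adjoint (tau m) $$ (i, j) = tau m $$ (i, j)"
    using ij m unfolding idx2 by (elim disjE) (simp_all add: adj_idx tau_ent[unfolded One_nat_def])
qed auto

lemma herm_entry: assumes "mat_adjoint A = A" "A \<in> carrier_mat n n" "i < n" "j < n"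
  shows "A $$ (i,j) = cnj (A $$ (j,i))"
proof -
  have "A $$ (i,j) = mat_adjoint A $$ (i,j)" using assms(1) by simp
  also have "\<dots> = cnj (A $$ (j,i))" using assms by (subst adj_idx) auto
  finally show ?thesis .
qed

lemma herm_real: assumes A: "A \<in> carrier_mat n n" and B: "B \<in> carrier_mat n n"
  and hA: "mat_adjoint A = A" and hB: "mat_adjoint B = B"
  shows "cnj (ctrace (A * B)) = ctrace (A * B)"
proof -
  have "cnj (ctrace (A * B)) = (\<Sum>i<n. \<Sum>j<n. cnj (A$$(i,j)) * cnj (B$$(j,i)))"
    by (simp add: ctrace_mult_gen[OF A B])
  also have "\<dots> = (\<Sum>i<n. \<Sum>j<n. A$$(j,i) * B$$(i,j))"
    by (intro sum.cong refl) (metis herm_entry[OF hA A] herm_entry[OF hB B] lessThan_iff complex_cnj_cnj)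
  also have "\<dots> = ctrace (B * A)" by (simp add: ctrace_mult_gen[OF B A] mult.commute)
  also have "\<dots> = ctrace (A * B)" using ctrace_comm[OF A B] by simp
  finally show ?thesis .
qed

lemma FF_real: assumes R: "R \<in> carrier_mat 4 4" "mat_adjoint R = R" and m: "m < 4" "n < 4"
  shows "FF R (tau m) (tau n) = complex_of_real (Re (FF R (tau m) (tau n)))"
proof -
  have "mat_adjoint (tau m \<otimes>\<^sub>k tau n) = tau m \<otimes>\<^sub>k tau n"
    using m by (simp add: adj_tensor tau_herm)
  hence "cnj (FF R (tau m) (tau n)) = FF R (tau m) (tau n)"
    unfolding FF_def using R by (intro herm_real[of _ 4]) auto
  thus ?thesis by (simp add: complex_eq_iff)
qed

lemma one_tensor: "1\<^sub>m 2 \<otimes>\<^sub>k 1\<^sub>m 2 = (1\<^sub>m 4 :: complex mat)"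
proof (rule eq_matI)
  fix i j assume "i < dim_row (1\<^sub>m 4 :: complex mat)" "j < dim_col (1\<^sub>m 4 :: complex mat)"
  hence ij: "i < 4" "j < 4" by auto
  show "(1\<^sub>m 2 \<otimes>\<^sub>k 1\<^sub>m 2) $$ (i, j) = (1\<^sub>m 4 :: complex mat) $$ (i, j)"
    using ij unfolding idx4 by (elim disjE) simp_all
qed auto


lemma FF_bloch1: assumes R: "R \<in> carrier_mat 4 4" and Y: "Y \<in> carrier_mat 2 2"
  shows "FF R (bloch_op k) Y = of_real (k$0) * FF R (pauli 0) Y + of_real (k$1) * FF R (pauli 1) Y + of_real (k$2) * FF R (pauli 2) Y"
  unfolding bloch_op_def using assms by (simp add: FF_add1 FF_smult1)
lemma FF_bloch2: assumes R: "R \<in> carrier_mat 4 4" and X: "X \<in> carrier_mat 2 2"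
  shows "FF R X (bloch_op k) = of_real (k$0) * FF R X (pauli 0) + of_real (k$1) * FF R X (pauli 1) + of_real (k$2) * FF R X (pauli 2)"
  unfolding bloch_op_def using assms by (simp add: FF_add2 FF_smult2)

lemma sum4s: "(\<Sum>m<(4::nat). f m) = f 0 + (\<Sum>a<3. f (Suc a))"
proof -
  have "(4::nat) = Suc 3" by simp
  then show ?thesis by (simp only: sum.lessThan_Suc_shift)
qed

lemma D2:
  assumes st: "two_qubit_state \<rho>" and x0: "\<forall>i<3. loc_x \<rho> i = 0" and k: "unit3 k" and l: "unit3 l"
  shows "(hs_dist \<rho> (chi \<rho> k l))^2 = 1/4 * ((\<Sum>j<3. (loc_y \<rho> j)^2) + (\<Sum>i<3. \<Sum>j<3. (corr \<rho> i j)^2)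
     - ((\<Sum>j<3. l$j * loc_y \<rho> j)^2 + (\<Sum>i<3. \<Sum>j<3. k$i * corr \<rho> i j * l$j)^2))"
proof -
  have R: "\<rho> \<in> carrier_mat 4 4" and H: "mat_adjoint \<rho> = \<rho>" and tr: "ctrace \<rho> = 1"
    using st unfolding two_qubit_state_def by auto
  define M where "M = \<rho> - chi \<rho> k l"
  have Mc: "M \<in> carrier_mat 4 4" unfolding M_def using R by (simp add: minus_carrier_mat)
  have FFM: "FF M X Y = FF \<rho> X Y - FF \<rho> (deph k X) (deph l Y)"
    if X: "X \<in> carrier_mat 2 2" and Y: "Y \<in> carrier_mat 2 2" for X Y
  proof -
    have "M * (X \<otimes>\<^sub>k Y) = \<rho> * (X \<otimes>\<^sub>k Y) - chi \<rho> k l * (X \<otimes>\<^sub>k Y)"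
      unfolding M_def using R X Y by (intro minus_mult_distrib_mat[of _ 4 4 _ _ 4]) auto
    hence "FF M X Y = ctrace (\<rho> * (X \<otimes>\<^sub>k Y)) - ctrace (chi \<rho> k l * (X \<otimes>\<^sub>k Y))"
      unfolding FF_def using R X Y by (simp add: ctrace_minus[of _ 4])
    thus ?thesis using R X Y by (simp add: chi_trace FF_def)
  qed
  let ?x = "loc_x \<rho>" and ?y = "loc_y \<rho>" and ?T = "corr \<rho>"
  have re: "FF \<rho> (tau m) (tau n) = complex_of_real (Re (FF \<rho> (tau m) (tau n)))" if "m < 4" "n < 4" for m n
    using FF_real[OF R H that] .
  have vx: "FF \<rho> (pauli i) (1\<^sub>m 2) = of_real (?x i)" if "i < 3" for i
    using re[of "Suc i" 0] that by (simp add: tau_def loc_x_def FF_def)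
  have vy: "FF \<rho> (1\<^sub>m 2) (pauli j) = of_real (?y j)" if "j < 3" for j
    using re[of 0 "Suc j"] that by (simp add: tau_def loc_y_def FF_def)
  have vT: "FF \<rho> (pauli i) (pauli j) = of_real (?T i j)" if "i < 3" "j < 3" for i j
    using re[of "Suc i" "Suc j"] that by (simp add: tau_def corr_def FF_def)
  have v00: "FF \<rho> (1\<^sub>m 2) (1\<^sub>m 2) = 1"
    unfolding FF_def one_tensor using R tr by simp
  define s where "s = (\<Sum>j<3. l$j * ?y j)"
  define c where "c = (\<Sum>i<3. \<Sum>j<3. k$i * ?T i j * l$j)"
  have b1: "FF \<rho> (bloch_op k) (1\<^sub>m 2) = 0"
    using R x0 by (simp add: FF_bloch1 vx)
  have b2: "FF \<rho> (1\<^sub>m 2) (bloch_op l) = of_real s"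
    using R by (simp add: FF_bloch2 vy s_def sum3)
  have b3: "FF \<rho> (bloch_op k) (bloch_op l) = of_real c"
    using R by (simp add: FF_bloch1 FF_bloch2 vT c_def sum3 algebra_simps)
  have dk: "deph k (tau (Suc a)) = complex_of_real (k$a) \<cdot>\<^sub>m bloch_op k" if "a < 3" for a
    using deph_pauli[OF k that] by (simp add: tau_def)
  have dl: "deph l (tau (Suc a)) = complex_of_real (l$a) \<cdot>\<^sub>m bloch_op l" if "a < 3" for a
    using deph_pauli[OF l that] by (simp add: tau_def)
  have d0k: "deph k (tau 0) = 1\<^sub>m 2" using deph_id[OF k] by (simp add: tau_def)
  have d0l: "deph l (tau 0) = 1\<^sub>m 2" using deph_id[OF l] by (simp add: tau_def)
  have e00: "FF M (tau 0) (tau 0) = 0"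
    using FFM[of "tau 0" "tau 0"] by (simp add: d0k d0l) (simp add: tau_def)
  have eA: "FF M (tau (Suc a)) (tau 0) = 0" if "a < 3" for a
    using FFM[of "tau (Suc a)" "tau 0"] that R x0 by (simp add: dk d0l FF_smult1 b1) (simp add: tau_def vx)
  have eB: "FF M (tau 0) (tau (Suc b)) = of_real (?y b - l$b * s)" if "b < 3" for b
    using FFM[of "tau 0" "tau (Suc b)"] that R by (simp add: dl d0k FF_smult2 b2) (simp add: tau_def vy)
  have eC: "FF M (tau (Suc a)) (tau (Suc b)) = of_real (?T a b - k$a * l$b * c)" if "a < 3" "b < 3" for a b
    using FFM[of "tau (Suc a)" "tau (Suc b)"] that R by (simp add: dl dk FF_smult1 FF_smult2 b3) (simp add: tau_def vT)
  have P: "Re (ctrace (M * mat_adjoint M)) = 1/4 * (\<Sum>a<4. \<Sum>b<4. (cmod (FF M (tau a) (tau b)))^2)"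
    using parseval[OF Mc] .
  also have "\<dots> = 1/4 * ((\<Sum>b<3. (?y b - l$b * s)^2) + (\<Sum>a<3. \<Sum>b<3. (?T a b - k$a * l$b * c)^2))"
  proof -
    have "(\<Sum>a<4. \<Sum>b<4. (cmod (FF M (tau a) (tau b)))^2)
       = (cmod (FF M (tau 0) (tau 0)))^2 + (\<Sum>b<3. (cmod (FF M (tau 0) (tau (Suc b))))^2)
         + (\<Sum>a<3. (cmod (FF M (tau (Suc a)) (tau 0)))^2 + (\<Sum>b<3. (cmod (FF M (tau (Suc a)) (tau (Suc b))))^2))"
      by (simp only: sum4s sum.distrib)
    also have "\<dots> = (\<Sum>b<3. (?y b - l$b * s)^2) + (\<Sum>a<3. \<Sum>b<3. (?T a b - k$a * l$b * c)^2)"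
      by (simp add: e00 eA eB eC del: of_real_diff of_real_mult)
    finally show ?thesis by simp
  qed
  finally have P2: "Re (ctrace (M * mat_adjoint M)) = 1/4 * ((\<Sum>b<3. (?y b - l$b * s)^2) + (\<Sum>a<3. \<Sum>b<3. (?T a b - k$a * l$b * c)^2))" .
  have nn: "0 \<le> Re (ctrace (M * mat_adjoint M))" unfolding P by (intro mult_nonneg_nonneg sum_nonneg) auto
  have hs: "(hs_dist \<rho> (chi \<rho> k l))^2 = Re (ctrace (M * mat_adjoint M))"
    unfolding hs_dist_def M_def[symmetric] using nn by simp
  have kk: "(k$0)^2 + (k$1)^2 + (k$2)^2 = 1" using unit3D[OF k] .
  have ll: "(l$0)^2 + (l$1)^2 + (l$2)^2 = 1" using unit3D[OF l] .
  have S1: "(\<Sum>b<3. (?y b - l$b * s)^2) = (\<Sum>j<3. (?y j)^2) - s^2"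
  proof -
    have "(\<Sum>b<3. (?y b - l$b * s)^2) = (\<Sum>j<3. (?y j)^2) - 2 * s * s + s^2 * ((l$0)^2 + (l$1)^2 + (l$2)^2)"
      unfolding s_def by (simp add: sum3 power2_eq_square algebra_simps)
    thus ?thesis using ll by (simp add: power2_eq_square)
  qed
  have S2: "(\<Sum>a<3. \<Sum>b<3. (?T a b - k$a * l$b * c)^2) = (\<Sum>i<3. \<Sum>j<3. (?T i j)^2) - c^2"
  proof -
    have "(\<Sum>a<3. \<Sum>b<3. (?T a b - k$a * l$b * c)^2) = (\<Sum>i<3. \<Sum>j<3. (?T i j)^2) - 2 * c * (\<Sum>i<3. \<Sum>j<3. k$i * ?T i j * l$j)
        + c^2 * ((k$0)^2 + (k$1)^2 + (k$2)^2) * ((l$0)^2 + (l$1)^2 + (l$2)^2)"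
      by (simp add: sum3 power2_eq_square algebra_simps)
    thus ?thesis using ll kk unfolding c_def[symmetric] by (simp add: power2_eq_square)
  qed
  show ?thesis unfolding hs P2 S1 S2 s_def[symmetric] c_def[symmetric] by (simp add: algebra_simps)
qed


definition qf :: "real mat \<Rightarrow> (nat \<Rightarrow> real) \<Rightarrow> real" where
  "qf S v = (\<Sum>i<3. \<Sum>j<3. v i * S$$(i,j) * v j)"
definition bf :: "real mat \<Rightarrow> (nat \<Rightarrow> real) \<Rightarrow> (nat \<Rightarrow> real) \<Rightarrow> real" where
  "bf S u w = (\<Sum>i<3. \<Sum>j<3. u i * S$$(i,j) * w j)"
definition ns :: "(nat \<Rightarrow> real) \<Rightarrow> real" where
  "ns v = (\<Sum>i<3. (v i)^2)"
definition ip :: "(nat \<Rightarrow> real) \<Rightarrow> (nat \<Rightarrow> real) \<Rightarrow> real" where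
  "ip u w = (\<Sum>i<3. u i * w i)"

lemma quad_zero: assumes "\<forall>t::real. a * t^2 + b * t \<le> 0" shows "b = 0"
proof (rule ccontr)
  assume b: "b \<noteq> 0"
  define d where "d = \<bar>a\<bar> + 1"
  have d: "d > 0" "a + d > 0" unfolding d_def by auto
  have "a * (b/d)^2 + b * (b/d) = b^2 * (a + d) / d^2"
    using d by (simp add: field_simps power2_eq_square)
  also have "\<dots> > 0" using d b by (intro divide_pos_pos mult_pos_pos) auto
  finally show False using assms by (metis not_le)
qed

lemma qf_expand: assumes sym: "\<forall>i<3. \<forall>j<3. S$$(i,j) = S$$(j,i)"
  shows "qf S (\<lambda>i. u i + t * w i) = qf S u + 2 * t * bf S u w + t^2 * qf S w"
  using sym unfolding qf_def bf_def by (simp add: sum3 power2_eq_square algebra_simps)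

lemma ns_expand: "ns (\<lambda>i. u i + t * w i) = ns u + 2 * t * ip u w + t^2 * ns w"
  unfolding ns_def ip_def by (simp add: sum3 power2_eq_square algebra_simps)

lemma qf_scale: "qf S (\<lambda>i. c * v i) = c^2 * qf S v"
  unfolding qf_def by (simp add: sum3 power2_eq_square algebra_simps)
lemma ns_scale: "ns (\<lambda>i. c * v i) = c^2 * ns v"
  unfolding ns_def by (simp add: sum3 power2_eq_square algebra_simps)

lemma ns_nonneg: "0 \<le> ns v" unfolding ns_def by (simp add: sum_nonneg)

lemma ns_zero: "ns v = 0 \<Longrightarrow> i < 3 \<Longrightarrow> v i = 0"
proof -
  assume "ns v = 0" "i < 3"
  hence h: "(v 0)^2 + (v 1)^2 + (v 2)^2 = 0" and i: "i = 0 \<or> i = 1 \<or> i = 2" unfolding ns_def by (auto simp: sum3)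
  have "v 0 = 0" "v 1 = 0" "v 2 = 0" using h by (smt (verit) zero_le_power2 zero_eq_power2)+
  thus "v i = 0" using i by auto
qed

lemma qf_cong: "(\<And>i. i < 3 \<Longrightarrow> u i = v i) \<Longrightarrow> qf S u = qf S v"
  unfolding qf_def by simp
lemma ns_cong: "(\<And>i. i < 3 \<Longrightarrow> u i = v i) \<Longrightarrow> ns u = ns v"
  unfolding ns_def by simp

definition vt :: "real \<times> real \<times> real \<Rightarrow> nat \<Rightarrow> real" where
  "vt p = (\<lambda>i. if i = 0 then fst p else if i = 1 then fst (snd p) else snd (snd p))"

lemma exists_max: "\<exists>u. ns u = 1 \<and> (\<forall>v. ns v = 1 \<longrightarrow> qf S v \<le> qf S u)"
proof -
  define K where "K = {p :: real \<times> real \<times> real. (fst p)^2 + (fst (snd p))^2 + (snd (snd p))^2 = 1}"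
  have cl: "closed K" unfolding K_def by (intro closed_Collect_eq continuous_intros)
  have sub: "K \<subseteq> {-1..1} \<times> {-1..1} \<times> {-1..1}"
  proof
    fix p assume "p \<in> K"
    then obtain a b c where p: "p = (a,b,c)" "a^2 + b^2 + c^2 = 1" unfolding K_def by (cases p) auto
    have "a^2 \<le> 1" "b^2 \<le> 1" "c^2 \<le> 1" using p(2) by (smt (verit) zero_le_power2)+
    hence "\<bar>a\<bar> \<le> 1" "\<bar>b\<bar> \<le> 1" "\<bar>c\<bar> \<le> 1" by (simp_all add: abs_square_le_1)
    thus "p \<in> {-1..1} \<times> {-1..1} \<times> {-1..1}" using p by auto
  qed
  have "compact (({-1..1} \<times> {-1..1} \<times> {-1..1}) \<inter> K)"
    by (intro compact_Int_closed compact_Times compact_Icc cl)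
  hence cK: "compact K" using sub by (simp add: Int_absorb1)
  have "(1,0,0) \<in> K" unfolding K_def by simp
  hence ne: "K \<noteq> {}" by blast
  have cont: "continuous_on K (\<lambda>p. qf S (vt p))"
    unfolding qf_def vt_def by (simp add: sum3) (intro continuous_intros)
  obtain p where p: "p \<in> K" "\<forall>y\<in>K. qf S (vt y) \<le> qf S (vt p)"
    using continuous_attains_sup[OF cK ne cont] by blast
  have nsp: "ns (vt p) = 1" using p(1) unfolding K_def ns_def vt_def by (simp add: sum3)
  have "qf S v \<le> qf S (vt p)" if "ns v = 1" for v
  proof -
    let ?q = "(v 0, v 1, v 2)"
    have "?q \<in> K" using that unfolding K_def ns_def by (simp add: sum3)
    moreover have "qf S v = qf S (vt ?q)"
    proof (rule qf_cong)
      fix i :: nat assume "i < 3" hence "i = 0 \<or> i = 1 \<or> i = 2" by auto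
      thus "v i = vt ?q i" by (auto simp: vt_def)
    qed
    ultimately show ?thesis using p(2) by simp
  qed
  thus ?thesis using nsp by blast
qed


lemma qf_hom: assumes u: "ns u = 1" "\<forall>v. ns v = 1 \<longrightarrow> qf S v \<le> qf S u"
  shows "qf S v \<le> qf S u * ns v"
proof (cases "ns v = 0")
  case True
  hence "qf S v = qf S (\<lambda>i. 0 * v i)" by (intro qf_cong) (simp add: ns_zero)
  thus ?thesis using True by (simp add: qf_def)
next
  case False
  define r where "r = sqrt (ns v)"
  have r: "r > 0" "r^2 = ns v" unfolding r_def using False ns_nonneg[of v] by auto
  define w where "w = (\<lambda>i. (1/r) * v i)"
  have "ns w = 1" unfolding w_def ns_scale using r False by (simp add: power_divide)
  hence "qf S w \<le> qf S u" using u by auto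
  moreover have "qf S v = qf S (\<lambda>i. r * w i)" unfolding w_def using r by (intro qf_cong) simp
  hence "qf S v = r^2 * qf S w" by (simp add: qf_scale)
  ultimately show ?thesis using r ns_nonneg[of v] by (simp add: mult.commute mult_left_mono)
qed

lemma lagrange: assumes sym: "\<forall>i<3. \<forall>j<3. S$$(i,j) = S$$(j,i)"
  and u: "ns u = 1" "\<forall>v. ns v = 1 \<longrightarrow> qf S v \<le> qf S u"
  shows "bf S u w = qf S u * ip u w"
proof -
  let ?M = "qf S u"
  have "\<forall>t. (qf S w - ?M * ns w) * t^2 + (2 * (bf S u w - ?M * ip u w)) * t \<le> 0"
  proof
    fix t :: real
    have "qf S (\<lambda>i. u i + t * w i) \<le> ?M * ns (\<lambda>i. u i + t * w i)" using qf_hom[OF u] by simp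
    thus "(qf S w - ?M * ns w) * t^2 + (2 * (bf S u w - ?M * ip u w)) * t \<le> 0"
      unfolding qf_expand[OF sym] ns_expand using u(1) by (simp add: algebra_simps)
  qed
  from quad_zero[OF this] show ?thesis by simp
qed

lemma max_qf: assumes S: "S \<in> carrier_mat 3 3" and sym: "\<forall>i<3. \<forall>j<3. S$$(i,j) = S$$(j,i)"
  shows "(\<forall>v. ns v = 1 \<longrightarrow> qf S v \<le> largest_eigenvalue S) \<and> (\<exists>v. ns v = 1 \<and> qf S v = largest_eigenvalue S)"
proof -
  obtain u where u: "ns u = 1" "\<forall>v. ns v = 1 \<longrightarrow> qf S v \<le> qf S u" using exists_max by blast
  define M where "M = qf S u"
  have dS: "dim_row S = 3" "dim_col S = 3" using S by auto
  have rowS: "(S *\<^sub>v vv) $ i = (\<Sum>j<3. S$$(i,j) * vv $ j)" if "i < 3" "vv \<in> carrier_vec 3" for i vv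
    using that dS by (simp add: scalar_prod_def atLeast0LessThan)
  define v where "v = vec 3 u"
  have v: "v \<in> carrier_vec 3" unfolding v_def by simp
  have ev: "S *\<^sub>v v = M \<cdot>\<^sub>v v"
  proof (rule eq_vecI)
    fix i assume "i < dim_vec (M \<cdot>\<^sub>v v)"
    hence i: "i < 3" unfolding v_def by simp
    define e where "e = (\<lambda>j. if j = i then 1 else (0::real))"
    have "bf S u e = M * ip u e" using lagrange[OF sym u] unfolding M_def .
    moreover have "bf S u e = (\<Sum>j<3. S$$(i,j) * u j)"
      unfolding bf_def e_def using i sym
      by (simp add: sum.distrib[symmetric] if_distrib sum.delta' cong: if_cong) (intro sum.cong; auto simp: mult.commute)
    moreover have "ip u e = u i" unfolding ip_def e_def using i by (simp add: if_distrib cong: if_cong)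
    ultimately have "(\<Sum>j<3. S$$(i,j) * u j) = M * u i" by simp
    thus "(S *\<^sub>v v) $ i = (M \<cdot>\<^sub>v v) $ i" using rowS[OF i v] i unfolding v_def by simp
  qed (simp add: v_def dS)
  have vnz: "v \<noteq> 0\<^sub>v 3"
  proof
    assume "v = 0\<^sub>v 3"
    hence "\<And>i. i < 3 \<Longrightarrow> u i = 0" unfolding v_def by (metis index_vec index_zero_vec(1))
    hence "ns u = 0" unfolding ns_def by simp
    thus False using u by simp
  qed
  have eM: "eigenvalue S M" unfolding eigenvalue_def eigenvector_def using v vnz ev dS by auto
  have le: "mu \<le> M" if emu: "eigenvalue S mu" for mu
  proof -
    obtain x where x: "x \<in> carrier_vec 3" "x \<noteq> 0\<^sub>v 3" "S *\<^sub>v x = mu \<cdot>\<^sub>v x"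
      using emu dS unfolding eigenvalue_def eigenvector_def by auto
    define w where "w = (\<lambda>i. x $ i)"
    have Sw: "(\<Sum>j<3. S$$(i,j) * w j) = mu * w i" if "i < 3" for i
      using rowS[OF that x(1)] x(3) that x(1) unfolding w_def by (metis index_smult_vec(1) carrier_vecD)
    have "qf S w = (\<Sum>i<3. w i * (\<Sum>j<3. S$$(i,j) * w j))"
      unfolding qf_def by (simp add: sum_distrib_left mult.assoc)
    also have "\<dots> = (\<Sum>i<3. mu * (w i)^2)" by (intro sum.cong refl) (simp add: Sw power2_eq_square)
    also have "\<dots> = mu * ns w" unfolding ns_def by (simp add: sum_distrib_left)
    finally have q: "qf S w = mu * ns w" .
    have "ns w \<noteq> 0"
    proof
      assume "ns w = 0"
      hence "x = 0\<^sub>v 3" using x(1) unfolding w_def by (intro eq_vecI) (auto simp: ns_zero)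
      thus False using x(2) by simp
    qed
    hence pos: "ns w > 0" using ns_nonneg[of w] by simp
    have "mu * ns w \<le> M * ns w" using qf_hom[OF u, of w] q unfolding M_def by simp
    thus ?thesis using pos by simp
  qed
  have fin: "finite {mu. eigenvalue S mu}"
  proof -
    have "char_poly S \<noteq> 0" using degree_monic_char_poly[OF S] by auto
    hence "finite {x. poly (char_poly S) x = 0}" by (rule poly_roots_finite)
    thus ?thesis using eigenvalue_root_char_poly[OF S] by simp
  qed
  have L: "largest_eigenvalue S = M"
    unfolding largest_eigenvalue_def by (rule Max_eqI[OF fin]) (use le eM in auto)
  show ?thesis unfolding L using qf_hom[OF u] u unfolding M_def by auto
qed


lemma cs3: "(\<Sum>i<3. k i * w i)^2 \<le> ns k * ns w"
proof -
  have "ns k * ns w - (\<Sum>i<3. k i * w i)^2 = (k 0 * w 1 - k 1 * w 0)^2 + (k 0 * w 2 - k 2 * w 0)^2 + (k 1 * w 2 - k 2 * w 1)^2"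
    unfolding ns_def by (simp add: sum3 power2_eq_square algebra_simps)
  moreover have "0 \<le> (k 0 * w 1 - k 1 * w 0)^2 + (k 0 * w 2 - k 2 * w 0)^2 + (k 1 * w 2 - k 2 * w 1)^2" by simp
  ultimately show ?thesis by linarith
qed

lemma S_ent: fixes T :: "nat \<Rightarrow> nat \<Rightarrow> real"
  assumes "i < 3" "j < 3"
  shows "(transpose_mat (mat 3 3 (\<lambda>(i,j). T i j)) * mat 3 3 (\<lambda>(i,j). T i j) + mat 3 3 (\<lambda>(i,j). y i * y j)) $$ (i,j)
     = (\<Sum>a<3. T a i * T a j) + y i * y j"
  using assms by (simp add: scalar_prod_def atLeast0LessThan)

lemma qf_S: fixes T :: "nat \<Rightarrow> nat \<Rightarrow> real" and y :: "nat \<Rightarrow> real"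
  defines "S \<equiv> transpose_mat (mat 3 3 (\<lambda>(i,j). T i j)) * mat 3 3 (\<lambda>(i,j). T i j) + mat 3 3 (\<lambda>(i,j). y i * y j)"
  shows "qf S v = ns (\<lambda>a. \<Sum>j<3. T a j * v j) + (\<Sum>j<3. y j * v j)^2"
proof -
  have "qf S v = (\<Sum>i<3. \<Sum>j<3. v i * ((\<Sum>a<3. T a i * T a j) + y i * y j) * v j)"
    unfolding qf_def S_def by (intro sum.cong refl) (simp only: S_ent lessThan_iff)
  also have "\<dots> = ns (\<lambda>a. \<Sum>j<3. T a j * v j) + (\<Sum>j<3. y j * v j)^2"
    unfolding ns_def by (simp add: sum3 power2_eq_square algebra_simps)
  finally show ?thesis .
qed

lemma S_carrier: "transpose_mat (mat 3 3 (\<lambda>(i,j). T i j)) * mat 3 3 (\<lambda>(i,j). T i j) + mat 3 3 (\<lambda>(i,j). y i * y j) \<in> carrier_mat 3 3"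
  by auto

lemma S_sym: fixes T :: "nat \<Rightarrow> nat \<Rightarrow> real"
  shows "\<forall>i<3. \<forall>j<3. (transpose_mat (mat 3 3 (\<lambda>(i,j). T i j)) * mat 3 3 (\<lambda>(i,j). T i j) + mat 3 3 (\<lambda>(i,j). y i * y j)) $$ (i,j)
    = (transpose_mat (mat 3 3 (\<lambda>(i,j). T i j)) * mat 3 3 (\<lambda>(i,j). T i j) + mat 3 3 (\<lambda>(i,j). y i * y j)) $$ (j,i)"
proof (intro allI impI)
  fix i j :: nat assume "i < 3" "j < 3"
  thus "(transpose_mat (mat 3 3 (\<lambda>(i,j). T i j)) * mat 3 3 (\<lambda>(i,j). T i j) + mat 3 3 (\<lambda>(i,j). y i * y j)) $$ (i,j)
    = (transpose_mat (mat 3 3 (\<lambda>(i,j). T i j)) * mat 3 3 (\<lambda>(i,j). T i j) + mat 3 3 (\<lambda>(i,j). y i * y j)) $$ (j,i)"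
    by (simp only: S_ent) (simp add: mult.commute)
qed

lemma unit3_ns: "unit3 k \<Longrightarrow> ns (\<lambda>i. k $ i) = 1"
  unfolding unit3_def ns_def by simp

theorem mainTheorem3:
  fixes \<rho> :: "complex mat"
  assumes "two_qubit_state \<rho>"
    and "\<forall>i<3. loc_x \<rho> i = 0"
  shows "geom_G \<rho> = 1/4 * ((\<Sum>j<3. (loc_y \<rho> j)^2) + (\<Sum>i<3. \<Sum>j<3. (corr \<rho> i j)^2)
           - largest_eigenvalue (transpose_mat (corr_mat \<rho>) * corr_mat \<rho> + Y_mat \<rho>))"
proof -
  let ?y = "loc_y \<rho>" and ?T = "corr \<rho>"
  define S where "S = transpose_mat (corr_mat \<rho>) * corr_mat \<rho> + Y_mat \<rho>"
  have Sdef: "S = transpose_mat (mat 3 3 (\<lambda>(i,j). ?T i j)) * mat 3 3 (\<lambda>(i,j). ?T i j) + mat 3 3 (\<lambda>(i,j). ?y i * ?y j)"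
    unfolding S_def corr_mat_def Y_mat_def by simp
  define L where "L = largest_eigenvalue S"
  define C where "C = (\<Sum>j<3. (?y j)^2) + (\<Sum>i<3. \<Sum>j<3. (?T i j)^2)"
  have mq: "(\<forall>v. ns v = 1 \<longrightarrow> qf S v \<le> L) \<and> (\<exists>v. ns v = 1 \<and> qf S v = L)"
    unfolding L_def Sdef by (rule max_qf[OF S_carrier S_sym])
  have qS: "qf S v = ns (\<lambda>a. \<Sum>j<3. ?T a j * v j) + (\<Sum>j<3. ?y j * v j)^2" for v
    unfolding Sdef by (rule qf_S)
  define F where "F = (\<lambda>k l. (\<Sum>j<3. l$j * ?y j)^2 + (\<Sum>i<3. \<Sum>j<3. k$i * ?T i j * l$j)^2)"
  have Feq: "(\<Sum>i<3. \<Sum>j<3. k$i * ?T i j * l$j) = (\<Sum>i<3. k$i * (\<Sum>j<3. ?T i j * l$j))" for k l :: "real vec"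
    by (simp add: sum_distrib_left mult.assoc)
  have D: "(hs_dist \<rho> (chi \<rho> k l))^2 = 1/4 * (C - F k l)" if "unit3 k" "unit3 l" for k l
    using D2[OF assms that] unfolding C_def F_def by simp
  have Fle: "F k l \<le> L" if k: "unit3 k" and l: "unit3 l" for k l
  proof -
    let ?w = "\<lambda>a. \<Sum>j<3. ?T a j * l$j"
    have "(\<Sum>i<3. k$i * ?w i)^2 \<le> ns (\<lambda>i. k$i) * ns ?w" by (rule cs3)
    hence "(\<Sum>i<3. k$i * ?w i)^2 \<le> ns ?w" using unit3_ns[OF k] by simp
    moreover have "qf S (\<lambda>i. l$i) \<le> L" using mq unit3_ns[OF l] by blast
    ultimately show ?thesis unfolding F_def Feq qS by (simp add: mult.commute)
  qed
  obtain v where v: "ns v = 1" "qf S v = L" using mq by blast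
  define l where "l = vec 3 v"
  have l: "unit3 l" unfolding unit3_def l_def using v(1) unfolding ns_def by simp
  let ?w = "\<lambda>a. \<Sum>j<3. ?T a j * v j"
  have lv: "\<And>j. j < 3 \<Longrightarrow> l $ j = v j" unfolding l_def by simp
  obtain k where k: "unit3 k" "(\<Sum>i<3. k$i * ?w i)^2 = ns ?w"
  proof (cases "ns ?w = 0")
    case True
    define k where "k = vec 3 (\<lambda>i. if i = 0 then 1 else (0::real))"
    have "unit3 k" unfolding unit3_def k_def by (simp add: sum3)
    moreover have "(\<Sum>i<3. k$i * ?w i)^2 = ns ?w" unfolding k_def using True ns_zero[OF True, of 0]
      by (simp add: sum3)
    ultimately show ?thesis using that by blast
  next
    case False
    define r where "r = sqrt (ns ?w)"
    have r: "r > 0" "r^2 = ns ?w" unfolding r_def using False ns_nonneg[of ?w] by auto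
    define k where "k = vec 3 (\<lambda>i. ?w i / r)"
    have "(\<Sum>i<3. (k $ i)^2) = ns (\<lambda>i. (1/r) * ?w i)" unfolding k_def ns_def by (intro sum.cong refl) simp
    also have "\<dots> = 1" unfolding ns_scale using r False by (simp add: power_divide)
    finally have "unit3 k" unfolding unit3_def k_def by simp
    moreover have "(\<Sum>i<3. k$i * ?w i) = (\<Sum>i<3. (?w i)^2 / r)"
      unfolding k_def by (intro sum.cong refl) (simp add: power2_eq_square)
    hence "(\<Sum>i<3. k$i * ?w i) = ns ?w / r" unfolding ns_def by (simp add: sum_divide_distrib)
    hence "(\<Sum>i<3. k$i * ?w i)^2 = ns ?w" using r False by (simp add: power_divide power2_eq_square)
    ultimately show ?thesis using that by blast
  qed
  have Fk: "F k l = L"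
  proof -
    have "(\<Sum>i<3. \<Sum>j<3. k$i * ?T i j * l$j) = (\<Sum>i<3. k$i * ?w i)"
      unfolding Feq by (intro sum.cong refl) (simp add: lv)
    moreover have "(\<Sum>j<3. l$j * ?y j) = (\<Sum>j<3. ?y j * v j)" by (intro sum.cong refl) (simp add: lv)
    ultimately show ?thesis unfolding F_def using k(2) v(2) qS[of v] by simp
  qed
  have "geom_G \<rho> = 1/4 * (C - L)"
    unfolding geom_G_def
  proof (rule cInf_eq_minimum)
    show "1/4 * (C - L) \<in> {(hs_dist \<rho> (chi \<rho> k l))^2 | k l. unit3 k \<and> unit3 l}"
      using D[OF k(1) l] Fk k(1) l by force
    fix x assume "x \<in> {(hs_dist \<rho> (chi \<rho> k l))^2 | k l. unit3 k \<and> unit3 l}"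
    then obtain k l where "unit3 k" "unit3 l" "x = (hs_dist \<rho> (chi \<rho> k l))^2" by blast
    thus "1/4 * (C - L) \<le> x" using D Fle by auto
  qed
  thus ?thesis unfolding C_def L_def S_def by simp
qed

end
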